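(* Let $\alpha,\beta$ be real constants with $\alpha\neq0$ and $\alpha\beta^2-4\alpha^2\neq0$, and let $\Omega\subseteq\mathbb{R}^2$ be a domain. Consider real-valued continuously differentiable functions $a_{jk},b_{jk}$ ($j,k\in\{1,2\}$), $c_l,d_l$ ($l\in\{1,2,3\}$) on $\Omega$, and the operator sending a pair of real $C^2$ functions $(u,v)$ on $\Omega$ to $(P,Q)$ with $$P=a_{11}\partial_xu+a_{12}\partial_yu+a_{21}\partial_xv+a_{22}\partial_yv+c_1u+c_2v+c_3,$$ $$Q=b_{11}\partial_xu+b_{12}\partial_yu+b_{21}\partial_xv+b_{22}\partial_yv+d_1u+d_2v+d_3.$$ Writing $w=u+iv$, this operator, viewed as $w\mapsto P+iQ$, is associated to the Cauchy–Riemann operator $\partial_{\bar z}$ (i.e. maps holomorphic $w$ to holomorphic $P+iQ$) if and only if: $c_1+id_1$ and $c_3+id_3$ are holomorphic, $c_2=-\alpha d_1$, $d_2=c_1-\beta d_1$, and there is a holomorphic function $A_1+iA_2$ ($A_1,A_2$ real) such that $$a_{21}=-\alpha A_2+a_{12},\quad a_{22}=\alpha A_1-\alpha a_{11}-\beta a_{12},\quad b_{21}=A_1-\beta A_2+b_{12},\quad b_{22}=\alpha A_2-\alpha b_{11}-\beta b_{12},$$ the coefficients $a_{11},a_{12},b_{11},b_{12}$ being otherwise arbitrary.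
   Context: For real parameters $\alpha,\beta$, $\mathbb{C}(\alpha,\beta)$ denotes the real algebra of numbers $x+iy$ with $i^2=-\alpha-\beta i$; products are $(x_1+iy_1)(x_2+iy_2)=(x_1x_2-\alpha y_1y_2)+i(x_1y_2+x_2y_1-\beta y_1y_2)$ and conjugation is $\overline{x+iy}=x-iy$. For $w=u+iv$ with real $u,v$ depending on $(x,y)$, $\partial_{\bar z}=\tfrac12(\partial_x+i\partial_y)$, and $w$ is holomorphic if $\partial_{\bar z}w=0$, i.e. $\partial_xu-\alpha\partial_yv=0$ and $\partial_yu+\partial_xv-\beta\partial_yv=0$. An operator $\mathbf{L}$ is associated to $\partial_{\bar z}$ if $\partial_{\bar z}w=0$ implies $\partial_{\bar z}(\mathbf{L}w)=0$. *)

theory Defs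
  imports "HOL-Analysis.Analysis"
begin

definition pdx :: "(real \<times> real \<Rightarrow> real) \<Rightarrow> real \<times> real \<Rightarrow> real" where
  "pdx f p = frechet_derivative f (at p) (1, 0)"

definition pdy :: "(real \<times> real \<Rightarrow> real) \<Rightarrow> real \<times> real \<Rightarrow> real" where
  "pdy f p = frechet_derivative f (at p) (0, 1)"

definition C1_on :: "(real \<times> real) set \<Rightarrow> (real \<times> real \<Rightarrow> real) \<Rightarrow> bool" where
  "C1_on \<Omega> f \<longleftrightarrow> (\<forall>p\<in>\<Omega>. f differentiable (at p)) \<and>
      continuous_on \<Omega> (pdx f) \<and> continuous_on \<Omega> (pdy f)"

definition C2_on :: "(real \<times> real) set \<Rightarrow> (real \<times> real \<Rightarrow> real) \<Rightarrow> bool" where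
  "C2_on \<Omega> f \<longleftrightarrow> C1_on \<Omega> f \<and> C1_on \<Omega> (pdx f) \<and> C1_on \<Omega> (pdy f)"

text \<open>w = u + i v is holomorphic in C(alpha,beta) on \<Omega>: differentiable and
  d_x u - alpha d_y v = 0, d_y u + d_x v - beta d_y v = 0.\<close>
definition holo :: "real \<Rightarrow> real \<Rightarrow> (real \<times> real) set \<Rightarrow>
    (real \<times> real \<Rightarrow> real) \<Rightarrow> (real \<times> real \<Rightarrow> real) \<Rightarrow> bool" where
  "holo \<alpha> \<beta> \<Omega> u v \<longleftrightarrow> (\<forall>p\<in>\<Omega>. u differentiable (at p) \<and> v differentiable (at p) \<and>
      pdx u p - \<alpha> * pdy v p = 0 \<and> pdy u p + pdx v p - \<beta> * pdy v p = 0)"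

definition opP :: "(real \<times> real \<Rightarrow> real) \<Rightarrow> (real \<times> real \<Rightarrow> real) \<Rightarrow>
    (real \<times> real \<Rightarrow> real) \<Rightarrow> (real \<times> real \<Rightarrow> real) \<Rightarrow>
    (real \<times> real \<Rightarrow> real) \<Rightarrow> (real \<times> real \<Rightarrow> real) \<Rightarrow> (real \<times> real \<Rightarrow> real) \<Rightarrow>
    (real \<times> real \<Rightarrow> real) \<Rightarrow> (real \<times> real \<Rightarrow> real) \<Rightarrow> real \<times> real \<Rightarrow> real" where
  "opP a11 a12 a21 a22 c1 c2 c3 u v = (\<lambda>p. a11 p * pdx u p + a12 p * pdy u p
      + a21 p * pdx v p + a22 p * pdy v p + c1 p * u p + c2 p * v p + c3 p)"

definition associated ::
  "real \<Rightarrow> real \<Rightarrow> (real \<times> real) set \<Rightarrow>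
   ((real \<times> real \<Rightarrow> real) \<Rightarrow> (real \<times> real \<Rightarrow> real) \<Rightarrow> real \<times> real \<Rightarrow> real) \<Rightarrow>
   ((real \<times> real \<Rightarrow> real) \<Rightarrow> (real \<times> real \<Rightarrow> real) \<Rightarrow> real \<times> real \<Rightarrow> real) \<Rightarrow> bool" where
  "associated \<alpha> \<beta> \<Omega> P Q \<longleftrightarrow>
     (\<forall>u v. C2_on \<Omega> u \<and> C2_on \<Omega> v \<and> holo \<alpha> \<beta> \<Omega> u v \<longrightarrow> holo \<alpha> \<beta> \<Omega> (P u v) (Q u v))"

end

theory Submission
  imports Defs
begin


definition J :: "(real \<times> real \<Rightarrow> real) \<Rightarrow> real \<times> real \<Rightarrow> real \<Rightarrow> real \<Rightarrow> bool" where
  "J f p a b \<longleftrightarrow> (f has_derivative (\<lambda>h. a * fst h + b * snd h)) (at p)"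

lemma J_pd: assumes "J f p a b" shows "pdx f p = a" "pdy f p = b" "f differentiable (at p)"
proof -
  have "(\<lambda>h. a * fst h + b * snd h) = frechet_derivative f (at p)"
    using assms unfolding J_def by (rule frechet_derivative_at)
  then show "pdx f p = a" "pdy f p = b" unfolding pdx_def pdy_def by (metis fst_conv snd_conv mult_1_right mult_zero_right add_0 add_0_right)+
  show "f differentiable (at p)" using assms unfolding J_def differentiable_def by blast
qed

lemma diff_J: assumes "f differentiable (at p)" shows "J f p (pdx f p) (pdy f p)"
proof -
  have d: "(f has_derivative frechet_derivative f (at p)) (at p)"
    using assms frechet_derivative_works by blast
  then have l: "linear (frechet_derivative f (at p))" using has_derivative_linear by blast
  have "frechet_derivative f (at p) h = pdx f p * fst h + pdy f p * snd h" for h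
  proof -
    obtain x y where h: "h = (x,y)" by (cases h)
    have e: "(x, y) = x *\<^sub>R (1::real,0::real) + y *\<^sub>R (0,1)" by simp
    have "frechet_derivative f (at p) (x,y) = x *\<^sub>R frechet_derivative f (at p) (1,0) + y *\<^sub>R frechet_derivative f (at p) (0,1)"
      by (subst e, simp only: linear_add[OF l] linear_cmul[OF l])
    then show ?thesis unfolding pdx_def pdy_def h by (simp add: mult.commute)
  qed
  then have "frechet_derivative f (at p) = (\<lambda>h. pdx f p * fst h + pdy f p * snd h)" by auto
  then show ?thesis using d unfolding J_def by simp
qed

lemma J_eqI: "J f p a b \<Longrightarrow> a = a' \<Longrightarrow> b = b' \<Longrightarrow> J f p a' b'" by simp

lemma J_const: "J (\<lambda>q. c) p 0 0" unfolding J_def by (simp add: has_derivative_const)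
lemma J_fst: "J (\<lambda>q. fst q) p 1 0" unfolding J_def by (rule has_derivative_eq_rhs, rule has_derivative_fst, rule has_derivative_ident) auto
lemma J_snd: "J (\<lambda>q. snd q) p 0 1" unfolding J_def by (rule has_derivative_eq_rhs, rule has_derivative_snd, rule has_derivative_ident) auto

lemma J_add: "J f p a b \<Longrightarrow> J g p c d \<Longrightarrow> J (\<lambda>q. f q + g q) p (a + c) (b + d)"
  unfolding J_def by (rule has_derivative_eq_rhs, rule has_derivative_add, assumption+) (auto simp: algebra_simps)
lemma J_diff: "J f p a b \<Longrightarrow> J g p c d \<Longrightarrow> J (\<lambda>q. f q - g q) p (a - c) (b - d)"
  unfolding J_def by (rule has_derivative_eq_rhs, rule has_derivative_diff, assumption+) (auto simp: algebra_simps)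
lemma J_mult: "J f p a b \<Longrightarrow> J g p c d \<Longrightarrow> J (\<lambda>q. f q * g q) p (f p * c + a * g p) (f p * d + b * g p)"
  unfolding J_def by (rule has_derivative_eq_rhs, rule has_derivative_mult, assumption+) (auto simp: algebra_simps)
lemma J_minus: "J f p a b \<Longrightarrow> J (\<lambda>q. - f q) p (- a) (- b)"
  unfolding J_def by (rule has_derivative_eq_rhs, rule has_derivative_minus, assumption+) (auto simp: algebra_simps)

lemma J_open: assumes "J f p a b" "open S" "p \<in> S" "\<And>q. q \<in> S \<Longrightarrow> f q = g q" shows "J g p a b"
  using assms(1) unfolding J_def
  by (rule has_derivative_transform_within_open[OF _ assms(2,3)]) (use assms(4) in auto)

lemma J_open_pd: assumes "f differentiable (at p)" "open S" "p \<in> S" "\<And>q. q \<in> S \<Longrightarrow> f q = g q"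
  shows "pdx g p = pdx f p" "pdy g p = pdy f p" "g differentiable (at p)"
  using J_pd[OF J_open[OF diff_J[OF assms(1)] assms(2-4)]] by auto

lemma J_zero_open: assumes "J f p a b" "open S" "p \<in> S" "\<And>q. q \<in> S \<Longrightarrow> f q = 0" shows "a = 0" "b = 0"
proof -
  have "J (\<lambda>q. 0) p a b" using J_open[OF assms(1-3)] assms(4) by auto
  moreover have "J (\<lambda>q. 0::real) p 0 0" by (rule J_const)
  ultimately show "a = 0" "b = 0" using J_pd by metis+
qed



lemma deriv_x: assumes "f differentiable (at (s,c))"
  shows "((\<lambda>t. f (t,c)) has_real_derivative pdx f (s,c)) (at s)"
proof -
  have P: "((\<lambda>t::real. (t,c)) has_derivative (\<lambda>h. (h,0))) (at s)"
    by (rule has_derivative_eq_rhs, rule has_derivative_Pair, rule has_derivative_ident, rule has_derivative_const) auto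
  have "((\<lambda>t. f (t,c)) has_derivative (\<lambda>h. pdx f (s,c) * fst (h,0::real) + pdy f (s,c) * snd (h,0::real))) (at s)"
    using has_derivative_compose[OF P diff_J[OF assms, unfolded J_def]] by simp
  moreover have "(\<lambda>h. h * pdx f (s,c)) = (*) (pdx f (s,c))" by (auto simp: fun_eq_iff)
  ultimately show ?thesis unfolding has_field_derivative_def by simp
qed

lemma deriv_y: assumes "f differentiable (at (c,s))"
  shows "((\<lambda>t. f (c,t)) has_real_derivative pdy f (c,s)) (at s)"
proof -
  have P: "((\<lambda>t::real. (c,t)) has_derivative (\<lambda>h. (0,h))) (at s)"
    by (rule has_derivative_eq_rhs, rule has_derivative_Pair, rule has_derivative_const, rule has_derivative_ident) auto
  have "((\<lambda>t. f (c,t)) has_derivative (\<lambda>h. pdx f (c,s) * fst (0::real,h) + pdy f (c,s) * snd (0::real,h))) (at s)"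
    using has_derivative_compose[OF P diff_J[OF assms, unfolded J_def]] by simp
  moreover have "(\<lambda>h. h * pdy f (c,s)) = (*) (pdy f (c,s))" by (auto simp: fun_eq_iff)
  ultimately show ?thesis unfolding has_field_derivative_def by simp
qed

lemma schwarz_key:
  assumes h: "h > 0"
    and box: "\<And>s t. a \<le> s \<Longrightarrow> s \<le> a + h \<Longrightarrow> b \<le> t \<Longrightarrow> t \<le> b + h \<Longrightarrow> (s,t) \<in> S"
    and d0: "\<forall>q\<in>S. f differentiable (at q)"
    and dx: "\<forall>q\<in>S. pdx f differentiable (at q)"
    and dy: "\<forall>q\<in>S. pdy f differentiable (at q)"
  shows "\<exists>s1 t1 s2 t2. a < s1 \<and> s1 < a + h \<and> b < t1 \<and> t1 < b + h \<and>
      a < s2 \<and> s2 < a + h \<and> b < t2 \<and> t2 < b + h \<and>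
      pdy (pdx f) (s1,t1) = pdx (pdy f) (s2,t2)"
proof -
  define D where "D = f (a+h,b+h) - f (a+h,b) - f (a,b+h) + f (a,b)"
  have hh: "a < a + h" "b < b + h" using h by auto
  obtain s1 where s1: "a < s1" "s1 < a + h"
    and e1: "(f (a+h,b+h) - f (a+h,b)) - (f (a,b+h) - f (a,b)) = h * (pdx f (s1,b+h) - pdx f (s1,b))"
  proof -
    have "\<exists>z. a < z \<and> z < a + h \<and> (f (a+h,b+h) - f (a+h,b)) - (f (a,b+h) - f (a,b)) = ((a+h) - a) * (pdx f (z,b+h) - pdx f (z,b))"
      by (rule MVT2[OF hh(1), where f="\<lambda>s. f (s,b+h) - f (s,b)"])
        (intro DERIV_diff deriv_x; use d0 box hh in auto)
    then show ?thesis using that by auto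
  qed
  obtain t1 where t1: "b < t1" "t1 < b + h"
    and e2: "pdx f (s1,b+h) - pdx f (s1,b) = h * pdy (pdx f) (s1,t1)"
  proof -
    have "\<exists>z. b < z \<and> z < b + h \<and> pdx f (s1,b+h) - pdx f (s1,b) = ((b+h) - b) * pdy (pdx f) (s1,z)"
      by (rule MVT2[OF hh(2), where f="\<lambda>t. pdx f (s1,t)"])
        (intro deriv_y; use dx box s1 in auto)
    then show ?thesis using that by auto
  qed
  obtain t2 where t2: "b < t2" "t2 < b + h"
    and e3: "(f (a+h,b+h) - f (a,b+h)) - (f (a+h,b) - f (a,b)) = h * (pdy f (a+h,t2) - pdy f (a,t2))"
  proof -
    have "\<exists>z. b < z \<and> z < b + h \<and> (f (a+h,b+h) - f (a,b+h)) - (f (a+h,b) - f (a,b)) = ((b+h) - b) * (pdy f (a+h,z) - pdy f (a,z))"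
      by (rule MVT2[OF hh(2), where f="\<lambda>t. f (a+h,t) - f (a,t)"])
        (intro DERIV_diff deriv_y; use d0 box hh in auto)
    then show ?thesis using that by auto
  qed
  obtain s2 where s2: "a < s2" "s2 < a + h"
    and e4: "pdy f (a+h,t2) - pdy f (a,t2) = h * pdx (pdy f) (s2,t2)"
  proof -
    have "\<exists>z. a < z \<and> z < a + h \<and> pdy f (a+h,t2) - pdy f (a,t2) = ((a+h) - a) * pdx (pdy f) (z,t2)"
      by (rule MVT2[OF hh(1), where f="\<lambda>s. pdy f (s,t2)"])
        (intro deriv_x; use dy box t2 in auto)
    then show ?thesis using that by auto
  qed
  have "h * (h * pdy (pdx f) (s1,t1)) = h * (h * pdx (pdy f) (s2,t2))"
    using e1 e2 e3 e4 by (simp add: algebra_simps)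
  then have "pdy (pdx f) (s1,t1) = pdx (pdy f) (s2,t2)" using h by simp
  then show ?thesis using s1 t1 s2 t2 by blast
qed

lemma absfact: "\<bar>A - P\<bar> < \<bar>P - Q\<bar> / 2 \<Longrightarrow> \<bar>B - Q\<bar> < \<bar>P - Q\<bar> / 2 \<Longrightarrow> A = B \<Longrightarrow> False"
  for A B P Q :: real by (simp add: abs_if split: if_splits)

lemma schwarz:
  assumes S: "open S" "p \<in> S"
    and d0: "\<forall>q\<in>S. f differentiable (at q)"
    and dx: "\<forall>q\<in>S. pdx f differentiable (at q)"
    and dy: "\<forall>q\<in>S. pdy f differentiable (at q)"
    and c1: "continuous_on S (pdy (pdx f))" and c2: "continuous_on S (pdx (pdy f))"
  shows "pdy (pdx f) p = pdx (pdy f) p"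
proof (rule ccontr)
  assume ne: "pdy (pdx f) p \<noteq> pdx (pdy f) p"
  define e where "e = \<bar>pdy (pdx f) p - pdx (pdy f) p\<bar> / 2"
  have e: "e > 0" using ne unfolding e_def by auto
  have i1: "isCont (pdy (pdx f)) p" using c1 S continuous_on_eq_continuous_at by blast
  have i2: "isCont (pdx (pdy f)) p" using c2 S continuous_on_eq_continuous_at by blast
  obtain r1 where r1: "r1 > 0" "\<And>q. dist q p < r1 \<Longrightarrow> dist (pdy (pdx f) q) (pdy (pdx f) p) < e"
    using i1 e unfolding continuous_at_eps_delta by blast
  obtain r2 where r2: "r2 > 0" "\<And>q. dist q p < r2 \<Longrightarrow> dist (pdx (pdy f) q) (pdx (pdy f) p) < e"
    using i2 e unfolding continuous_at_eps_delta by blast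
  obtain r3 where r3: "r3 > 0" "ball p r3 \<subseteq> S" using S open_contains_ball by blast
  define r where "r = min r1 (min r2 r3)"
  have r: "r > 0" "r \<le> r1" "r \<le> r2" "r \<le> r3" using r1 r2 r3 unfolding r_def by auto
  obtain a b where p: "p = (a,b)" by (cases p)
  define h where "h = r / 2"
  have h: "h > 0" using r unfolding h_def by auto
  have near: "dist (s,t) p < r" if "a \<le> s" "s \<le> a + h" "b \<le> t" "t \<le> b + h" for s t
  proof -
    have "dist (s,t) p = sqrt ((s - a)^2 + (t - b)^2)" unfolding p dist_Pair_Pair dist_real_def by simp
    also have "\<dots> \<le> sqrt (h^2 + h^2)"
      using that by (intro real_sqrt_le_mono add_mono power_mono) auto
    also have "\<dots> = sqrt 2 * h" by (simp add: real_sqrt_mult h less_imp_le)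
    also have "\<dots> < 2 * h" using h sqrt2_less_2 by simp
    finally show ?thesis unfolding h_def by simp
  qed
  have box: "(s,t) \<in> S" if "a \<le> s" "s \<le> a + h" "b \<le> t" "t \<le> b + h" for s t
    using near[OF that] r r3 by (auto simp: dist_commute)
  obtain s1 t1 s2 t2 where st: "a < s1" "s1 < a + h" "b < t1" "t1 < b + h"
      "a < s2" "s2 < a + h" "b < t2" "t2 < b + h" and eq: "pdy (pdx f) (s1,t1) = pdx (pdy f) (s2,t2)"
    using schwarz_key[OF h box d0 dx dy] by blast
  have q1: "dist (pdy (pdx f) (s1,t1)) (pdy (pdx f) p) < e"
    using r1(2) near[of s1 t1] st r by auto
  have q2: "dist (pdx (pdy f) (s2,t2)) (pdx (pdy f) p) < e"
    using r2(2) near[of s2 t2] st r by auto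
  show False using q1 q2 eq unfolding e_def dist_real_def by (rule absfact)
qed



definition Px where "Px a11 a12 a21 a22 c1 c2 c3 u v p =
  pdx a11 p * pdx u p + a11 p * pdx (pdx u) p + pdx a12 p * pdy u p + a12 p * pdx (pdy u) p
  + pdx a21 p * pdx v p + a21 p * pdx (pdx v) p + pdx a22 p * pdy v p + a22 p * pdx (pdy v) p
  + pdx c1 p * u p + c1 p * pdx u p + pdx c2 p * v p + c2 p * pdx v p + pdx c3 p"

definition Py where "Py a11 a12 a21 a22 c1 c2 c3 u v p =
  pdy a11 p * pdx u p + a11 p * pdy (pdx u) p + pdy a12 p * pdy u p + a12 p * pdy (pdy u) p
  + pdy a21 p * pdx v p + a21 p * pdy (pdx v) p + pdy a22 p * pdy v p + a22 p * pdy (pdy v) p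
  + pdy c1 p * u p + c1 p * pdy u p + pdy c2 p * v p + c2 p * pdy v p + pdy c3 p"

lemma J_opP:
  assumes d: "a11 differentiable (at p)" "a12 differentiable (at p)" "a21 differentiable (at p)"
    "a22 differentiable (at p)" "c1 differentiable (at p)" "c2 differentiable (at p)"
    "c3 differentiable (at p)" "u differentiable (at p)" "v differentiable (at p)"
    "pdx u differentiable (at p)" "pdy u differentiable (at p)"
    "pdx v differentiable (at p)" "pdy v differentiable (at p)"
  shows "J (opP a11 a12 a21 a22 c1 c2 c3 u v) p (Px a11 a12 a21 a22 c1 c2 c3 u v p) (Py a11 a12 a21 a22 c1 c2 c3 u v p)"
  unfolding opP_def Px_def Py_def
  apply (rule J_eqI)
    apply ((rule J_add J_mult diff_J[OF d(1)] diff_J[OF d(2)] diff_J[OF d(3)] diff_J[OF d(4)]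
      diff_J[OF d(5)] diff_J[OF d(6)] diff_J[OF d(7)] diff_J[OF d(8)] diff_J[OF d(9)]
      diff_J[OF d(10)] diff_J[OF d(11)] diff_J[OF d(12)] diff_J[OF d(13)])+)
   apply (simp_all add: algebra_simps)
  done

lemma holo_at:
  assumes "\<forall>p\<in>S. f differentiable (at p) \<and> g differentiable (at p)"
    and "\<And>p. p \<in> S \<Longrightarrow> pdx f p - \<alpha> * pdy g p = 0 \<and> pdy f p + pdx g p - \<beta> * pdy g p = 0"
  shows "holo \<alpha> \<beta> S f g"
  using assms unfolding holo_def by auto



lemma lin3:
  assumes "open S" "p \<in> S" "G differentiable (at p)" "H differentiable (at p)" "K differentiable (at p)"
    "\<forall>q\<in>S. F q = k1 * G q + k2 * H q + k3 * K q"
  shows "pdx F p = k1 * pdx G p + k2 * pdx H p + k3 * pdx K p"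
    "pdy F p = k1 * pdy G p + k2 * pdy H p + k3 * pdy K p"
proof -
  have "J (\<lambda>q. k1 * G q + k2 * H q + k3 * K q) p
      (k1 * pdx G p + k2 * pdx H p + k3 * pdx K p) (k1 * pdy G p + k2 * pdy H p + k3 * pdy K p)"
    apply (rule J_eqI)
      apply ((rule J_add J_mult J_const diff_J[OF assms(3)] diff_J[OF assms(4)] diff_J[OF assms(5)])+)
    by simp_all
  from J_pd[OF J_open[OF this assms(1,2)]] assms(6)
  show "pdx F p = k1 * pdx G p + k2 * pdx H p + k3 * pdx K p"
    "pdy F p = k1 * pdy G p + k2 * pdy H p + k3 * pdy K p" by auto
qed

lemma holoD: "holo \<alpha> \<beta> S f g \<Longrightarrow> p \<in> S \<Longrightarrow> f differentiable (at p) \<and> g differentiable (at p) \<and>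
   pdx f p = \<alpha> * pdy g p \<and> pdy f p = \<beta> * pdy g p - pdx g p"
  unfolding holo_def by auto

lemma C1D: "C1_on S f \<Longrightarrow> p \<in> S \<Longrightarrow> f differentiable (at p)"
  unfolding C1_on_def by auto

lemma if_dir:
  assumes O: "open \<Omega>"
    and C: "C1_on \<Omega> a11" "C1_on \<Omega> a12" "C1_on \<Omega> a21" "C1_on \<Omega> a22"
    "C1_on \<Omega> b11" "C1_on \<Omega> b12" "C1_on \<Omega> b21" "C1_on \<Omega> b22"
    "C1_on \<Omega> c1" "C1_on \<Omega> c2" "C1_on \<Omega> c3"
    "C1_on \<Omega> d1" "C1_on \<Omega> d2" "C1_on \<Omega> d3"
    and h1: "holo \<alpha> \<beta> \<Omega> c1 d1" and h3: "holo \<alpha> \<beta> \<Omega> c3 d3"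
    and r1: "\<forall>p\<in>\<Omega>. c2 p = - \<alpha> * d1 p \<and> d2 p = c1 p - \<beta> * d1 p"
    and hA: "holo \<alpha> \<beta> \<Omega> A1 A2"
    and rA: "\<forall>p\<in>\<Omega>. a21 p = - \<alpha> * A2 p + a12 p
                   \<and> a22 p = \<alpha> * A1 p - \<alpha> * a11 p - \<beta> * a12 p
                   \<and> b21 p = A1 p - \<beta> * A2 p + b12 p
                   \<and> b22 p = \<alpha> * A2 p - \<alpha> * b11 p - \<beta> * b12 p"
    and u: "C2_on \<Omega> u" and v: "C2_on \<Omega> v" and huv: "holo \<alpha> \<beta> \<Omega> u v"
  shows "holo \<alpha> \<beta> \<Omega> (opP a11 a12 a21 a22 c1 c2 c3 u v) (opP b11 b12 b21 b22 d1 d2 d3 u v)"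
proof (rule holo_at)
  have dd: "a11 differentiable (at p)" "a12 differentiable (at p)" "a21 differentiable (at p)" "a22 differentiable (at p)"
    "b11 differentiable (at p)" "b12 differentiable (at p)" "b21 differentiable (at p)" "b22 differentiable (at p)"
    "c1 differentiable (at p)" "c2 differentiable (at p)" "c3 differentiable (at p)"
    "d1 differentiable (at p)" "d2 differentiable (at p)" "d3 differentiable (at p)"
    "u differentiable (at p)" "v differentiable (at p)"
    "pdx u differentiable (at p)" "pdy u differentiable (at p)"
    "pdx v differentiable (at p)" "pdy v differentiable (at p)"
    "A1 differentiable (at p)" "A2 differentiable (at p)"
    if "p \<in> \<Omega>" for p
    using C1D[OF C(1) that] C1D[OF C(2) that] C1D[OF C(3) that] C1D[OF C(4) that]
      C1D[OF C(5) that] C1D[OF C(6) that] C1D[OF C(7) that] C1D[OF C(8) that]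
      C1D[OF C(9) that] C1D[OF C(10) that] C1D[OF C(11) that]
      C1D[OF C(12) that] C1D[OF C(13) that] C1D[OF C(14) that]
      u v holoD[OF hA that] that unfolding C2_on_def C1_on_def by auto
  note JP = J_opP[OF dd(1-4) dd(9-11) dd(15-20)]
  note JQ = J_opP[OF dd(5-8) dd(12-14) dd(15-20)]
  show "\<forall>p\<in>\<Omega>. opP a11 a12 a21 a22 c1 c2 c3 u v differentiable (at p) \<and> opP b11 b12 b21 b22 d1 d2 d3 u v differentiable (at p)"
    using J_pd(3)[OF JP] J_pd(3)[OF JQ] by blast
  fix p assume p: "p \<in> \<Omega>"
  have PQ: "pdx (opP a11 a12 a21 a22 c1 c2 c3 u v) p = Px a11 a12 a21 a22 c1 c2 c3 u v p"
    "pdy (opP a11 a12 a21 a22 c1 c2 c3 u v) p = Py a11 a12 a21 a22 c1 c2 c3 u v p"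
    "pdx (opP b11 b12 b21 b22 d1 d2 d3 u v) p = Px b11 b12 b21 b22 d1 d2 d3 u v p"
    "pdy (opP b11 b12 b21 b22 d1 d2 d3 u v) p = Py b11 b12 b21 b22 d1 d2 d3 u v p"
    using J_pd[OF JP[OF p]] J_pd[OF JQ[OF p]] p by auto
  note d = dd[OF p]
  have hu: "pdx u p = \<alpha> * pdy v p" "pdy u p = \<beta> * pdy v p - pdx v p" using holoD[OF huv p] by auto
  have hc1: "pdx c1 p = \<alpha> * pdy d1 p" "pdy c1 p = \<beta> * pdy d1 p - pdx d1 p" using holoD[OF h1 p] by auto
  have hc3: "pdx c3 p = \<alpha> * pdy d3 p" "pdy c3 p = \<beta> * pdy d3 p - pdx d3 p" using holoD[OF h3 p] by auto
  have hA1: "pdx A1 p = \<alpha> * pdy A2 p" "pdy A1 p = \<beta> * pdy A2 p - pdx A2 p" using holoD[OF hA p] by auto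
  have e1: "\<forall>q\<in>\<Omega>. pdx u q = \<alpha> * pdy v q + 0 * pdy v q + 0 * pdy v q" using huv unfolding holo_def by auto
  have e2: "\<forall>q\<in>\<Omega>. pdy u q = \<beta> * pdy v q + (-1) * pdx v q + 0 * pdx v q" using huv unfolding holo_def by auto
  have uxx: "pdx (pdx u) p = \<alpha> * pdx (pdy v) p" "pdy (pdx u) p = \<alpha> * pdy (pdy v) p"
    using lin3[OF O p d(20) d(20) d(20) e1] by auto
  have uyy: "pdx (pdy u) p = \<beta> * pdx (pdy v) p - pdx (pdx v) p" "pdy (pdy u) p = \<beta> * pdy (pdy v) p - pdy (pdx v) p"
    using lin3[OF O p d(20) d(19) d(19) e2] by auto
  have su: "pdy (pdx u) p = pdx (pdy u) p"
    using schwarz[OF O p] u unfolding C2_on_def C1_on_def by blast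
  have sv: "pdy (pdx v) p = pdx (pdy v) p"
    using schwarz[OF O p] v unfolding C2_on_def C1_on_def by blast
  have vxx: "pdx (pdx v) p = \<beta> * pdx (pdy v) p - \<alpha> * pdy (pdy v) p"
    using su uxx uyy by simp
  have ra21: "\<forall>q\<in>\<Omega>. a21 q = (-\<alpha>) * A2 q + 1 * a12 q + 0 * a12 q" using rA by auto
  have ra22: "\<forall>q\<in>\<Omega>. a22 q = \<alpha> * A1 q + (-\<alpha>) * a11 q + (-\<beta>) * a12 q" using rA by auto
  have rb21: "\<forall>q\<in>\<Omega>. b21 q = 1 * A1 q + (-\<beta>) * A2 q + 1 * b12 q" using rA by auto
  have rb22: "\<forall>q\<in>\<Omega>. b22 q = \<alpha> * A2 q + (-\<alpha>) * b11 q + (-\<beta>) * b12 q" using rA by auto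
  have rc2: "\<forall>q\<in>\<Omega>. c2 q = (-\<alpha>) * d1 q + 0 * d1 q + 0 * d1 q" using r1 by auto
  have rd2: "\<forall>q\<in>\<Omega>. d2 q = 1 * c1 q + (-\<beta>) * d1 q + 0 * d1 q" using r1 by auto
  note l21 = lin3[OF O p d(22) d(2) d(2) ra21]
  note l22 = lin3[OF O p d(21) d(1) d(2) ra22]
  note m21 = lin3[OF O p d(21) d(22) d(6) rb21]
  note m22 = lin3[OF O p d(22) d(5) d(6) rb22]
  note lc2 = lin3[OF O p d(12) d(12) d(12) rc2]
  note ld2 = lin3[OF O p d(9) d(12) d(12) rd2]
  have vals: "a21 p = - \<alpha> * A2 p + a12 p" "a22 p = \<alpha> * A1 p - \<alpha> * a11 p - \<beta> * a12 p"
     "b21 p = A1 p - \<beta> * A2 p + b12 p" "b22 p = \<alpha> * A2 p - \<alpha> * b11 p - \<beta> * b12 p"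
     "c2 p = - \<alpha> * d1 p" "d2 p = c1 p - \<beta> * d1 p" using rA r1 p by auto
  note eqs = hu hc1 hc3 hA1 uxx(1) uyy sv vxx l21 l22 m21 m22 lc2 ld2 vals
  have uxy: "pdy (pdx u) p = \<alpha> * pdy (pdy v) p" by (rule uxx(2))
  show "pdx (opP a11 a12 a21 a22 c1 c2 c3 u v) p - \<alpha> * pdy (opP b11 b12 b21 b22 d1 d2 d3 u v) p = 0 \<and>
        pdy (opP a11 a12 a21 a22 c1 c2 c3 u v) p + pdx (opP b11 b12 b21 b22 d1 d2 d3 u v) p -
        \<beta> * pdy (opP b11 b12 b21 b22 d1 d2 d3 u v) p = 0"
    unfolding PQ Px_def Py_def
    by (simp only: eqs uxy) (simp add: algebra_simps)
qed



lemma C2I: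
  assumes J0: "\<And>p. J f p (fx p) (fy p)" and J1: "\<And>p. J fx p (fxx p) (fxy p)" and J2: "\<And>p. J fy p (fyx p) (fyy p)"
    and c: "continuous_on UNIV fx" "continuous_on UNIV fy" "continuous_on UNIV fxx" "continuous_on UNIV fxy"
      "continuous_on UNIV fyx" "continuous_on UNIV fyy"
  shows "C2_on S f" "pdx f = fx" "pdy f = fy" "pdx fx = fxx" "pdy fx = fxy" "pdx fy = fyx" "pdy fy = fyy"
proof -
  show e: "pdx f = fx" "pdy f = fy" "pdx fx = fxx" "pdy fx = fxy" "pdx fy = fyx" "pdy fy = fyy"
    using J_pd[OF J0] J_pd[OF J1] J_pd[OF J2] by auto
  have cs: "continuous_on S fx" "continuous_on S fy" "continuous_on S fxx" "continuous_on S fxy"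
      "continuous_on S fyx" "continuous_on S fyy"
    using c continuous_on_subset subset_UNIV by metis+
  show "C2_on S f" unfolding C2_on_def C1_on_def e using J_pd(3)[OF J0] J_pd(3)[OF J1] J_pd(3)[OF J2] cs by auto
qed

lemma test_raw:
  assumes assoc: "associated \<alpha> \<beta> \<Omega> (opP a11 a12 a21 a22 c1 c2 c3) (opP b11 b12 b21 b22 d1 d2 d3)"
    and C: "C1_on \<Omega> a11" "C1_on \<Omega> a12" "C1_on \<Omega> a21" "C1_on \<Omega> a22"
    "C1_on \<Omega> b11" "C1_on \<Omega> b12" "C1_on \<Omega> b21" "C1_on \<Omega> b22"
    "C1_on \<Omega> c1" "C1_on \<Omega> c2" "C1_on \<Omega> c3"
    "C1_on \<Omega> d1" "C1_on \<Omega> d2" "C1_on \<Omega> d3"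
    and u: "C2_on \<Omega> u" and v: "C2_on \<Omega> v" and huv: "holo \<alpha> \<beta> \<Omega> u v" and p: "p \<in> \<Omega>"
  shows "Px a11 a12 a21 a22 c1 c2 c3 u v p - \<alpha> * Py b11 b12 b21 b22 d1 d2 d3 u v p = 0"
    "Py a11 a12 a21 a22 c1 c2 c3 u v p + Px b11 b12 b21 b22 d1 d2 d3 u v p - \<beta> * Py b11 b12 b21 b22 d1 d2 d3 u v p = 0"
proof -
  have dd: "a11 differentiable (at p)" "a12 differentiable (at p)" "a21 differentiable (at p)" "a22 differentiable (at p)"
    "b11 differentiable (at p)" "b12 differentiable (at p)" "b21 differentiable (at p)" "b22 differentiable (at p)"
    "c1 differentiable (at p)" "c2 differentiable (at p)" "c3 differentiable (at p)"
    "d1 differentiable (at p)" "d2 differentiable (at p)" "d3 differentiable (at p)"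
    "u differentiable (at p)" "v differentiable (at p)"
    "pdx u differentiable (at p)" "pdy u differentiable (at p)"
    "pdx v differentiable (at p)" "pdy v differentiable (at p)"
    using C1D[OF C(1) p] C1D[OF C(2) p] C1D[OF C(3) p] C1D[OF C(4) p]
      C1D[OF C(5) p] C1D[OF C(6) p] C1D[OF C(7) p] C1D[OF C(8) p]
      C1D[OF C(9) p] C1D[OF C(10) p] C1D[OF C(11) p]
      C1D[OF C(12) p] C1D[OF C(13) p] C1D[OF C(14) p]
      u v p unfolding C2_on_def C1_on_def by auto
  note JP = J_pd[OF J_opP[OF dd(1-4) dd(9-11) dd(15-20)]]
  note JQ = J_pd[OF J_opP[OF dd(5-8) dd(12-14) dd(15-20)]]
  have "holo \<alpha> \<beta> \<Omega> (opP a11 a12 a21 a22 c1 c2 c3 u v) (opP b11 b12 b21 b22 d1 d2 d3 u v)"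
    using assoc u v huv unfolding associated_def by blast
  then show "Px a11 a12 a21 a22 c1 c2 c3 u v p - \<alpha> * Py b11 b12 b21 b22 d1 d2 d3 u v p = 0"
    "Py a11 a12 a21 a22 c1 c2 c3 u v p + Px b11 b12 b21 b22 d1 d2 d3 u v p - \<beta> * Py b11 b12 b21 b22 d1 d2 d3 u v p = 0"
    unfolding holo_def using p JP JQ by auto
qed


lemma tZ: "J (\<lambda>q. 0) p 0 0" "J (\<lambda>q. 1) p 0 0" by (rule J_const)+

lemma test0: "C2_on S (\<lambda>q. 0)" "pdx (\<lambda>q. 0) = (\<lambda>q. 0)" "pdy (\<lambda>q. 0) = (\<lambda>q. 0)"
  using C2I[where f="\<lambda>q. 0" and fx="\<lambda>q. 0" and fy="\<lambda>q. 0" and fxx="\<lambda>q. 0" and fxy="\<lambda>q. 0"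
      and fyx="\<lambda>q. 0" and fyy="\<lambda>q. 0", OF tZ(1) tZ(1) tZ(1)] by auto
lemma test1: "C2_on S (\<lambda>q. 1)" "pdx (\<lambda>q. 1) = (\<lambda>q. 0)" "pdy (\<lambda>q. 1) = (\<lambda>q. 0)"
  using C2I[where f="\<lambda>q. 1" and fx="\<lambda>q. 0" and fy="\<lambda>q. 0" and fxx="\<lambda>q. 0" and fxy="\<lambda>q. 0"
      and fyx="\<lambda>q. 0" and fyy="\<lambda>q. 0", OF tZ(2) tZ(1) tZ(1)] by auto

lemma testL1u: "C2_on S (\<lambda>q. - snd q)" "pdx (\<lambda>q. - snd q) = (\<lambda>q. 0)" "pdy (\<lambda>q. - snd q) = (\<lambda>q. -1)"
proof -
  have a: "J (\<lambda>q. - snd q) p ((\<lambda>q. 0) p) ((\<lambda>q. -1) p)" for p by (rule J_eqI, (rule J_add J_mult J_diff J_minus J_const J_fst J_snd)+) simp_all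
  have b: "J (\<lambda>q. -1) p 0 0" for p by (rule J_const)
  show "C2_on S (\<lambda>q. - snd q)" "pdx (\<lambda>q. - snd q) = (\<lambda>q. 0)" "pdy (\<lambda>q. - snd q) = (\<lambda>q. -1)"
    using C2I[where fxx="\<lambda>q. 0" and fxy="\<lambda>q. 0" and fyx="\<lambda>q. 0" and fyy="\<lambda>q. 0", OF a tZ(1) b] by auto
qed

lemma testL1v: "C2_on S (\<lambda>q. fst q)" "pdx (\<lambda>q. fst q) = (\<lambda>q. 1)" "pdy (\<lambda>q. fst q) = (\<lambda>q. 0)"
proof -
  have a: "J (\<lambda>q. fst q) p ((\<lambda>q. 1) p) ((\<lambda>q. 0) p)" for p by (rule J_fst)
  show "C2_on S (\<lambda>q. fst q)" "pdx (\<lambda>q. fst q) = (\<lambda>q. 1)" "pdy (\<lambda>q. fst q) = (\<lambda>q. 0)"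
    using C2I[where fxx="\<lambda>q. 0" and fxy="\<lambda>q. 0" and fyx="\<lambda>q. 0" and fyy="\<lambda>q. 0", OF a tZ(2) tZ(1)] by auto
qed

lemma testL2v: "C2_on S (\<lambda>q. snd q)" "pdx (\<lambda>q. snd q) = (\<lambda>q. 0)" "pdy (\<lambda>q. snd q) = (\<lambda>q. 1)"
proof -
  have a: "J (\<lambda>q. snd q) p ((\<lambda>q. 0) p) ((\<lambda>q. 1) p)" for p by (rule J_snd)
  show "C2_on S (\<lambda>q. snd q)" "pdx (\<lambda>q. snd q) = (\<lambda>q. 0)" "pdy (\<lambda>q. snd q) = (\<lambda>q. 1)"
    using C2I[where fxx="\<lambda>q. 0" and fxy="\<lambda>q. 0" and fyx="\<lambda>q. 0" and fyy="\<lambda>q. 0", OF a tZ(1) tZ(2)] by auto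
qed

lemma testL2u: "C2_on S (\<lambda>q. \<alpha> * fst q + \<beta> * snd q)" "pdx (\<lambda>q. \<alpha> * fst q + \<beta> * snd q) = (\<lambda>q. \<alpha>)"
   "pdy (\<lambda>q. \<alpha> * fst q + \<beta> * snd q) = (\<lambda>q. \<beta>)"
proof -
  have a: "J (\<lambda>q. \<alpha> * fst q + \<beta> * snd q) p ((\<lambda>q. \<alpha>) p) ((\<lambda>q. \<beta>) p)" for p by (rule J_eqI, (rule J_add J_mult J_diff J_minus J_const J_fst J_snd)+) simp_all
  have b: "J (\<lambda>q. c) p 0 0" for p c by (rule J_const)
  show "C2_on S (\<lambda>q. \<alpha> * fst q + \<beta> * snd q)" "pdx (\<lambda>q. \<alpha> * fst q + \<beta> * snd q) = (\<lambda>q. \<alpha>)"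
   "pdy (\<lambda>q. \<alpha> * fst q + \<beta> * snd q) = (\<lambda>q. \<beta>)"
    using C2I[where fxx="\<lambda>q. 0" and fxy="\<lambda>q. 0" and fyx="\<lambda>q. 0" and fyy="\<lambda>q. 0", OF a b b] by auto
qed

definition Qv where "Qv \<alpha> = (\<lambda>q::real\<times>real. (1/2) * (fst q * fst q) + (-1/(2*\<alpha>)) * (snd q * snd q))"
definition Qu where "Qu \<alpha> \<beta> = (\<lambda>q::real\<times>real. (-1) * (fst q * snd q) + (-\<beta>/(2*\<alpha>)) * (snd q * snd q))"

lemma testQv: assumes "\<alpha> \<noteq> 0"
  shows "C2_on S (Qv \<alpha>)" "pdx (Qv \<alpha>) = (\<lambda>q. fst q)" "pdy (Qv \<alpha>) = (\<lambda>q. (-1/\<alpha>) * snd q)"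
    "pdx (\<lambda>q. fst q) = (\<lambda>q. 1)" "pdy (\<lambda>q::real\<times>real. fst q) = (\<lambda>q. 0)"
    "pdx (\<lambda>q. (-1/\<alpha>) * snd q) = (\<lambda>q. 0)" "pdy (\<lambda>q. (-1/\<alpha>) * snd q) = (\<lambda>q. -1/\<alpha>)"
proof -
  have a: "J (Qv \<alpha>) p ((\<lambda>q. fst q) p) ((\<lambda>q. (-1/\<alpha>) * snd q) p)" for p
    unfolding Qv_def by (rule J_eqI, (rule J_add J_mult J_diff J_minus J_const J_fst J_snd)+) (simp_all add: field_simps assms)
  have b: "J (\<lambda>q. fst q) p ((\<lambda>q. 1) p) ((\<lambda>q. 0) p)" for p by (rule J_fst)
  have c: "J (\<lambda>q. (-1/\<alpha>) * snd q) p ((\<lambda>q. 0) p) ((\<lambda>q. -1/\<alpha>) p)" for p by (rule J_eqI, (rule J_add J_mult J_diff J_minus J_const J_fst J_snd)+) simp_all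
  have cc: "continuous_on UNIV (\<lambda>q::real\<times>real. fst q)" "continuous_on UNIV (\<lambda>q::real\<times>real. (-1/\<alpha>) * snd q)"
    "continuous_on UNIV (\<lambda>q::real\<times>real. 1::real)" "continuous_on UNIV (\<lambda>q::real\<times>real. 0::real)"
    "continuous_on UNIV (\<lambda>q::real\<times>real. 0::real)" "continuous_on UNIV (\<lambda>q::real\<times>real. -1/\<alpha>)"
    by (intro continuous_intros)+
  show "C2_on S (Qv \<alpha>)" "pdx (Qv \<alpha>) = (\<lambda>q. fst q)" "pdy (Qv \<alpha>) = (\<lambda>q. (-1/\<alpha>) * snd q)"
    "pdx (\<lambda>q. fst q) = (\<lambda>q. 1)" "pdy (\<lambda>q::real\<times>real. fst q) = (\<lambda>q. 0)"
    "pdx (\<lambda>q. (-1/\<alpha>) * snd q) = (\<lambda>q. 0)" "pdy (\<lambda>q. (-1/\<alpha>) * snd q) = (\<lambda>q. -1/\<alpha>)"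
    using C2I[OF a b c cc] by auto
qed

lemma testQu: assumes "\<alpha> \<noteq> 0"
  shows "C2_on S (Qu \<alpha> \<beta>)" "pdx (Qu \<alpha> \<beta>) = (\<lambda>q. - snd q)" "pdy (Qu \<alpha> \<beta>) = (\<lambda>q. - fst q - (\<beta>/\<alpha>) * snd q)"
    "pdx (\<lambda>q. - snd q) = (\<lambda>q. 0)" "pdy (\<lambda>q::real\<times>real. - snd q) = (\<lambda>q. -1)"
    "pdx (\<lambda>q. - fst q - (\<beta>/\<alpha>) * snd q) = (\<lambda>q. -1)" "pdy (\<lambda>q. - fst q - (\<beta>/\<alpha>) * snd q) = (\<lambda>q. -\<beta>/\<alpha>)"
proof -
  have a: "J (Qu \<alpha> \<beta>) p ((\<lambda>q. - snd q) p) ((\<lambda>q. - fst q - (\<beta>/\<alpha>) * snd q) p)" for p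
    unfolding Qu_def by (rule J_eqI, (rule J_add J_mult J_diff J_minus J_const J_fst J_snd)+) (simp_all add: field_simps assms)
  have b: "J (\<lambda>q. - snd q) p ((\<lambda>q. 0) p) ((\<lambda>q. -1) p)" for p by (rule J_eqI, (rule J_add J_mult J_diff J_minus J_const J_fst J_snd)+) simp_all
  have c: "J (\<lambda>q. - fst q - (\<beta>/\<alpha>) * snd q) p ((\<lambda>q. -1) p) ((\<lambda>q. -\<beta>/\<alpha>) p)" for p by (rule J_eqI, (rule J_add J_mult J_diff J_minus J_const J_fst J_snd)+) simp_all
  have cc: "continuous_on UNIV (\<lambda>q::real\<times>real. - snd q)" "continuous_on UNIV (\<lambda>q::real\<times>real. - fst q - (\<beta>/\<alpha>) * snd q)"
    "continuous_on UNIV (\<lambda>q::real\<times>real. 0::real)" "continuous_on UNIV (\<lambda>q::real\<times>real. -1::real)"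
    "continuous_on UNIV (\<lambda>q::real\<times>real. -1::real)" "continuous_on UNIV (\<lambda>q::real\<times>real. -\<beta>/\<alpha>)"
    by (intro continuous_intros)+
  show "C2_on S (Qu \<alpha> \<beta>)" "pdx (Qu \<alpha> \<beta>) = (\<lambda>q. - snd q)" "pdy (Qu \<alpha> \<beta>) = (\<lambda>q. - fst q - (\<beta>/\<alpha>) * snd q)"
    "pdx (\<lambda>q. - snd q) = (\<lambda>q. 0)" "pdy (\<lambda>q::real\<times>real. - snd q) = (\<lambda>q. -1)"
    "pdx (\<lambda>q. - fst q - (\<beta>/\<alpha>) * snd q) = (\<lambda>q. -1)" "pdy (\<lambda>q. - fst q - (\<beta>/\<alpha>) * snd q) = (\<lambda>q. -\<beta>/\<alpha>)"
    using C2I[OF a b c cc] by auto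
qed



lemma pd_const: "pdx (\<lambda>q. c) = (\<lambda>q. 0)" "pdy (\<lambda>q. c) = (\<lambda>q. 0)"
  using J_pd[OF J_const] by auto

lemma holoI2: "C2_on S u \<Longrightarrow> C2_on S v \<Longrightarrow>
   (\<And>p. p \<in> S \<Longrightarrow> pdx u p - \<alpha> * pdy v p = 0 \<and> pdy u p + pdx v p - \<beta> * pdy v p = 0) \<Longrightarrow> holo \<alpha> \<beta> S u v"
  unfolding holo_def C2_on_def C1_on_def by auto

lemma pointwise:
  assumes a0: "\<alpha> \<noteq> 0"
    and assoc: "associated \<alpha> \<beta> \<Omega> (opP a11 a12 a21 a22 c1 c2 c3) (opP b11 b12 b21 b22 d1 d2 d3)"
    and C: "C1_on \<Omega> a11" "C1_on \<Omega> a12" "C1_on \<Omega> a21" "C1_on \<Omega> a22"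
    "C1_on \<Omega> b11" "C1_on \<Omega> b12" "C1_on \<Omega> b21" "C1_on \<Omega> b22"
    "C1_on \<Omega> c1" "C1_on \<Omega> c2" "C1_on \<Omega> c3"
    "C1_on \<Omega> d1" "C1_on \<Omega> d2" "C1_on \<Omega> d3"
    and p: "p \<in> \<Omega>"
  shows "pdx c3 p = \<alpha> * pdy d3 p \<and> pdy c3 p = \<beta> * pdy d3 p - pdx d3 p
    \<and> pdx c1 p = \<alpha> * pdy d1 p \<and> pdy c1 p = \<beta> * pdy d1 p - pdx d1 p
    \<and> pdx c2 p = \<alpha> * pdy d2 p \<and> pdy c2 p = \<beta> * pdy d2 p - pdx d2 p
    \<and> pdx a21 p = pdx a12 p + \<alpha> * (pdy b21 p - pdy b12 p) - (c2 p + \<alpha> * d1 p)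
    \<and> pdy a21 p = pdy a12 p - (pdx b21 p - pdx b12 p) + \<beta> * (pdy b21 p - pdy b12 p) - (d2 p - c1 p + \<beta> * d1 p)
    \<and> pdx a22 p = - \<alpha> * pdx a11 p - \<beta> * pdx a12 p + \<alpha> * (\<alpha> * pdy b11 p + \<beta> * pdy b12 p + pdy b22 p)
         + \<alpha> * (d2 p - c1 p + \<beta> * d1 p)
    \<and> pdy a22 p = - \<alpha> * pdy a11 p - \<beta> * pdy a12 p - (\<alpha> * pdx b11 p + \<beta> * pdx b12 p + pdx b22 p)
         + \<beta> * (\<alpha> * pdy b11 p + \<beta> * pdy b12 p + pdy b22 p) - (c2 p + \<alpha> * d1 p) + \<beta> * (d2 p - c1 p + \<beta> * d1 p)
    \<and> a21 p - a12 p + \<alpha> * b11 p + \<beta> * b12 p + b22 p = 0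
    \<and> \<alpha> * (b21 p - b12 p) + \<beta> * (\<alpha> * b11 p + \<beta> * b12 p + b22 p) - (\<alpha> * a11 p + \<beta> * a12 p + a22 p) = 0"
proof -
  note TR = test_raw[OF assoc C]
  have hT0: "holo \<alpha> \<beta> \<Omega> (\<lambda>q. 0) (\<lambda>q. 0)" by (rule holoI2[OF test0(1) test0(1)]) (simp add: pd_const)
  have hT1: "holo \<alpha> \<beta> \<Omega> (\<lambda>q. 1) (\<lambda>q. 0)" by (rule holoI2[OF test1(1) test0(1)]) (simp add: pd_const)
  have hT2: "holo \<alpha> \<beta> \<Omega> (\<lambda>q. 0) (\<lambda>q. 1)" by (rule holoI2[OF test0(1) test1(1)]) (simp add: pd_const)
  have hL1: "holo \<alpha> \<beta> \<Omega> (\<lambda>q. - snd q) (\<lambda>q. fst q)" by (rule holoI2[OF testL1u(1) testL1v(1)]) (simp add: testL1u testL1v)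
  have hL2: "holo \<alpha> \<beta> \<Omega> (\<lambda>q. \<alpha> * fst q + \<beta> * snd q) (\<lambda>q. snd q)" by (rule holoI2[OF testL2u(1) testL2v(1)]) (simp add: testL2u testL2v)
  have hQ: "holo \<alpha> \<beta> \<Omega> (Qu \<alpha> \<beta>) (Qv \<alpha>)" by (rule holoI2[OF testQu(1)[OF a0] testQv(1)[OF a0]]) (simp add: testQu[OF a0] testQv[OF a0] a0)
  note R0 = TR[OF test0(1) test0(1) hT0 p]
  note R1 = TR[OF test1(1) test0(1) hT1 p]
  note R2 = TR[OF test0(1) test1(1) hT2 p]
  note RL1 = TR[OF testL1u(1) testL1v(1) hL1 p]
  note RL2 = TR[OF testL2u(1) testL2v(1) hL2 p]
  note RQ = TR[OF testQu(1)[OF a0] testQv(1)[OF a0] hQ p]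
  have e0: "pdx c3 p = \<alpha> * pdy d3 p" "pdy c3 p = \<beta> * pdy d3 p - pdx d3 p"
    using R0 by (simp_all add: Px_def Py_def pd_const algebra_simps)
  have e1: "pdx c1 p = \<alpha> * pdy d1 p" "pdy c1 p = \<beta> * pdy d1 p - pdx d1 p"
    using R1 e0 by (simp_all add: Px_def Py_def pd_const algebra_simps)
  have e2: "pdx c2 p = \<alpha> * pdy d2 p" "pdy c2 p = \<beta> * pdy d2 p - pdx d2 p"
    using R2 e0 by (simp_all add: Px_def Py_def pd_const algebra_simps)
  have iL1a: "Px a11 a12 a21 a22 c1 c2 c3 (\<lambda>q. - snd q) (\<lambda>q. fst q) p - \<alpha> * Py b11 b12 b21 b22 d1 d2 d3 (\<lambda>q. - snd q) (\<lambda>q. fst q) p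
     = (pdx a21 p - pdx a12 p) - \<alpha> * (pdy b21 p - pdy b12 p) + (c2 p + \<alpha> * d1 p)"
    by (simp add: Px_def Py_def pd_const testL1u testL1v e0 e1 e2 algebra_simps)
  have iL1b: "Py a11 a12 a21 a22 c1 c2 c3 (\<lambda>q. - snd q) (\<lambda>q. fst q) p + Px b11 b12 b21 b22 d1 d2 d3 (\<lambda>q. - snd q) (\<lambda>q. fst q) p
      - \<beta> * Py b11 b12 b21 b22 d1 d2 d3 (\<lambda>q. - snd q) (\<lambda>q. fst q) p
     = (pdy a21 p - pdy a12 p) + (pdx b21 p - pdx b12 p) - \<beta> * (pdy b21 p - pdy b12 p) + (d2 p - c1 p + \<beta> * d1 p)"
    by (simp add: Px_def Py_def pd_const testL1u testL1v e0 e1 e2 algebra_simps)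
  have iL2a: "Px a11 a12 a21 a22 c1 c2 c3 (\<lambda>q. \<alpha> * fst q + \<beta> * snd q) (\<lambda>q. snd q) p - \<alpha> * Py b11 b12 b21 b22 d1 d2 d3 (\<lambda>q. \<alpha> * fst q + \<beta> * snd q) (\<lambda>q. snd q) p
     = (\<alpha> * pdx a11 p + \<beta> * pdx a12 p + pdx a22 p) - \<alpha> * (\<alpha> * pdy b11 p + \<beta> * pdy b12 p + pdy b22 p) - \<alpha> * (d2 p - c1 p + \<beta> * d1 p)"
    by (simp add: Px_def Py_def pd_const testL2u testL2v e0 e1 e2 algebra_simps)
  have iL2b: "Py a11 a12 a21 a22 c1 c2 c3 (\<lambda>q. \<alpha> * fst q + \<beta> * snd q) (\<lambda>q. snd q) p + Px b11 b12 b21 b22 d1 d2 d3 (\<lambda>q. \<alpha> * fst q + \<beta> * snd q) (\<lambda>q. snd q) p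
      - \<beta> * Py b11 b12 b21 b22 d1 d2 d3 (\<lambda>q. \<alpha> * fst q + \<beta> * snd q) (\<lambda>q. snd q) p
     = (\<alpha> * pdy a11 p + \<beta> * pdy a12 p + pdy a22 p) + (\<alpha> * pdx b11 p + \<beta> * pdx b12 p + pdx b22 p)
       - \<beta> * (\<alpha> * pdy b11 p + \<beta> * pdy b12 p + pdy b22 p) + (c2 p + \<alpha> * d1 p) - \<beta> * (d2 p - c1 p + \<beta> * d1 p)"
    by (simp add: Px_def Py_def pd_const testL2u testL2v e0 e1 e2 algebra_simps)
  have l1: "pdx a21 p = pdx a12 p + \<alpha> * (pdy b21 p - pdy b12 p) - (c2 p + \<alpha> * d1 p)"
    "pdy a21 p = pdy a12 p - (pdx b21 p - pdx b12 p) + \<beta> * (pdy b21 p - pdy b12 p) - (d2 p - c1 p + \<beta> * d1 p)"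
    using RL1 iL1a iL1b by linarith+
  have l2: "pdx a22 p = - \<alpha> * pdx a11 p - \<beta> * pdx a12 p + \<alpha> * (\<alpha> * pdy b11 p + \<beta> * pdy b12 p + pdy b22 p)
         + \<alpha> * (d2 p - c1 p + \<beta> * d1 p)"
    "pdy a22 p = - \<alpha> * pdy a11 p - \<beta> * pdy a12 p - (\<alpha> * pdx b11 p + \<beta> * pdx b12 p + pdx b22 p)
         + \<beta> * (\<alpha> * pdy b11 p + \<beta> * pdy b12 p + pdy b22 p) - (c2 p + \<alpha> * d1 p) + \<beta> * (d2 p - c1 p + \<beta> * d1 p)"
    using RL2 iL2a iL2b by linarith+
  have iQa: "Px a11 a12 a21 a22 c1 c2 c3 (Qu \<alpha> \<beta>) (Qv \<alpha>) p - \<alpha> * Py b11 b12 b21 b22 d1 d2 d3 (Qu \<alpha> \<beta>) (Qv \<alpha>) p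
     = a21 p - a12 p + \<alpha> * b11 p + \<beta> * b12 p + b22 p"
    unfolding Px_def Py_def testQu[OF a0] testQv[OF a0] pd_const
    by (simp add: Qu_def Qv_def e0 e1 e2 l1 l2 field_simps a0)
  have iQb: "\<alpha> * (Py a11 a12 a21 a22 c1 c2 c3 (Qu \<alpha> \<beta>) (Qv \<alpha>) p + Px b11 b12 b21 b22 d1 d2 d3 (Qu \<alpha> \<beta>) (Qv \<alpha>) p
      - \<beta> * Py b11 b12 b21 b22 d1 d2 d3 (Qu \<alpha> \<beta>) (Qv \<alpha>) p)
     = \<alpha> * (b21 p - b12 p) + \<beta> * (\<alpha> * b11 p + \<beta> * b12 p + b22 p) - (\<alpha> * a11 p + \<beta> * a12 p + a22 p)"
    unfolding Px_def Py_def testQu[OF a0] testQv[OF a0] pd_const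
    by (simp add: Qu_def Qv_def e0 e1 e2 l1 l2 field_simps a0)
  have q: "a21 p - a12 p + \<alpha> * b11 p + \<beta> * b12 p + b22 p = 0"
    "\<alpha> * (b21 p - b12 p) + \<beta> * (\<alpha> * b11 p + \<beta> * b12 p + b22 p) - (\<alpha> * a11 p + \<beta> * a12 p + a22 p) = 0"
    using RQ iQa iQb by auto
  show ?thesis using e0 e1 e2 l1 l2 q by blast
qed



lemma only_if:
  assumes a0: "\<alpha> \<noteq> 0" and ab: "\<alpha> * \<beta>^2 - 4 * \<alpha>^2 \<noteq> 0" and O: "open \<Omega>"
    and C: "C1_on \<Omega> a11" "C1_on \<Omega> a12" "C1_on \<Omega> a21" "C1_on \<Omega> a22"
    "C1_on \<Omega> b11" "C1_on \<Omega> b12" "C1_on \<Omega> b21" "C1_on \<Omega> b22"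
    "C1_on \<Omega> c1" "C1_on \<Omega> c2" "C1_on \<Omega> c3"
    "C1_on \<Omega> d1" "C1_on \<Omega> d2" "C1_on \<Omega> d3"
    and assoc: "associated \<alpha> \<beta> \<Omega> (opP a11 a12 a21 a22 c1 c2 c3) (opP b11 b12 b21 b22 d1 d2 d3)"
  shows "holo \<alpha> \<beta> \<Omega> c1 d1 \<and> holo \<alpha> \<beta> \<Omega> c3 d3
        \<and> (\<forall>p\<in>\<Omega>. c2 p = - \<alpha> * d1 p \<and> d2 p = c1 p - \<beta> * d1 p)
        \<and> (\<exists>A1 A2. holo \<alpha> \<beta> \<Omega> A1 A2 \<and>
             (\<forall>p\<in>\<Omega>. a21 p = - \<alpha> * A2 p + a12 p
                   \<and> a22 p = \<alpha> * A1 p - \<alpha> * a11 p - \<beta> * a12 p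
                   \<and> b21 p = A1 p - \<beta> * A2 p + b12 p
                   \<and> b22 p = \<alpha> * A2 p - \<alpha> * b11 p - \<beta> * b12 p))"
proof -
  note PW = pointwise[OF a0 assoc C]
  have dd: "a11 differentiable (at p)" "a12 differentiable (at p)" "a21 differentiable (at p)" "a22 differentiable (at p)"
    "b11 differentiable (at p)" "b12 differentiable (at p)" "b21 differentiable (at p)" "b22 differentiable (at p)"
    "c1 differentiable (at p)" "c2 differentiable (at p)" "c3 differentiable (at p)"
    "d1 differentiable (at p)" "d2 differentiable (at p)" "d3 differentiable (at p)"
    if p: "p \<in> \<Omega>" for p
    using C1D[OF C(1) p] C1D[OF C(2) p] C1D[OF C(3) p] C1D[OF C(4) p]
      C1D[OF C(5) p] C1D[OF C(6) p] C1D[OF C(7) p] C1D[OF C(8) p]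
      C1D[OF C(9) p] C1D[OF C(10) p] C1D[OF C(11) p]
      C1D[OF C(12) p] C1D[OF C(13) p] C1D[OF C(14) p] by auto
  have H1: "holo \<alpha> \<beta> \<Omega> c1 d1" unfolding holo_def using dd PW by auto
  have H3: "holo \<alpha> \<beta> \<Omega> c3 d3" unfolding holo_def using dd PW by auto
  define S1 where "S1 = (\<lambda>q. a21 q - a12 q + \<alpha> * b11 q + \<beta> * b12 q + b22 q)"
  define S2 where "S2 = (\<lambda>q. \<alpha> * (b21 q - b12 q) + \<beta> * (\<alpha> * b11 q + \<beta> * b12 q + b22 q) - (\<alpha> * a11 q + \<beta> * a12 q + a22 q))"
  have E: "c2 p + \<alpha> * d1 p = 0 \<and> d2 p - c1 p + \<beta> * d1 p = 0
     \<and> pdx a21 p - pdx a12 p + \<alpha> * pdx b11 p + \<beta> * pdx b12 p + pdx b22 p = 0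
     \<and> pdy a21 p - pdy a12 p + \<alpha> * pdy b11 p + \<beta> * pdy b12 p + pdy b22 p = 0
     \<and> \<alpha> * (pdx b21 p - pdx b12 p) + \<beta> * (\<alpha> * pdx b11 p + \<beta> * pdx b12 p + pdx b22 p) - (\<alpha> * pdx a11 p + \<beta> * pdx a12 p + pdx a22 p) = 0
     \<and> \<alpha> * (pdy b21 p - pdy b12 p) + \<beta> * (\<alpha> * pdy b11 p + \<beta> * pdy b12 p + pdy b22 p) - (\<alpha> * pdy a11 p + \<beta> * pdy a12 p + pdy a22 p) = 0"
    if p: "p \<in> \<Omega>" for p
  proof -
    note d = dd[OF p]
    have J1: "J S1 p (pdx a21 p - pdx a12 p + \<alpha> * pdx b11 p + \<beta> * pdx b12 p + pdx b22 p)
       (pdy a21 p - pdy a12 p + \<alpha> * pdy b11 p + \<beta> * pdy b12 p + pdy b22 p)"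
      unfolding S1_def
      by (rule J_eqI, (rule J_add J_diff J_mult J_const diff_J[OF d(1)] diff_J[OF d(2)] diff_J[OF d(3)]
        diff_J[OF d(4)] diff_J[OF d(5)] diff_J[OF d(6)] diff_J[OF d(7)] diff_J[OF d(8)])+) simp_all
    have J2: "J S2 p (\<alpha> * (pdx b21 p - pdx b12 p) + \<beta> * (\<alpha> * pdx b11 p + \<beta> * pdx b12 p + pdx b22 p) - (\<alpha> * pdx a11 p + \<beta> * pdx a12 p + pdx a22 p))
       (\<alpha> * (pdy b21 p - pdy b12 p) + \<beta> * (\<alpha> * pdy b11 p + \<beta> * pdy b12 p + pdy b22 p) - (\<alpha> * pdy a11 p + \<beta> * pdy a12 p + pdy a22 p))"
      unfolding S2_def
      by (rule J_eqI, (rule J_add J_diff J_mult J_const diff_J[OF d(1)] diff_J[OF d(2)] diff_J[OF d(3)]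
        diff_J[OF d(4)] diff_J[OF d(5)] diff_J[OF d(6)] diff_J[OF d(7)] diff_J[OF d(8)])+) (simp_all add: algebra_simps)
    have z1: "\<And>q. q \<in> \<Omega> \<Longrightarrow> S1 q = 0" unfolding S1_def using PW by blast
    have z2: "\<And>q. q \<in> \<Omega> \<Longrightarrow> S2 q = 0" unfolding S2_def using PW by blast
    note F1 = J_zero_open[OF J1 O p z1]
    note F2 = J_zero_open[OF J2 O p z2]
    note P = PW[OF p]
    have l: "pdx a21 p = pdx a12 p + \<alpha> * (pdy b21 p - pdy b12 p) - (c2 p + \<alpha> * d1 p)"
    "pdy a21 p = pdy a12 p - (pdx b21 p - pdx b12 p) + \<beta> * (pdy b21 p - pdy b12 p) - (d2 p - c1 p + \<beta> * d1 p)"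
    "pdx a22 p = - \<alpha> * pdx a11 p - \<beta> * pdx a12 p + \<alpha> * (\<alpha> * pdy b11 p + \<beta> * pdy b12 p + pdy b22 p)
         + \<alpha> * (d2 p - c1 p + \<beta> * d1 p)"
    "pdy a22 p = - \<alpha> * pdy a11 p - \<beta> * pdy a12 p - (\<alpha> * pdx b11 p + \<beta> * pdx b12 p + pdx b22 p)
         + \<beta> * (\<alpha> * pdy b11 p + \<beta> * pdy b12 p + pdy b22 p) - (c2 p + \<alpha> * d1 p) + \<beta> * (d2 p - c1 p + \<beta> * d1 p)"
      using P by blast+
    define e1 where "e1 = c2 p + \<alpha> * d1 p"
    define e2 where "e2 = d2 p - c1 p + \<beta> * d1 p"
    have k1: "2 * e1 = \<beta> * e2" using F1(1) F2(2) l unfolding e1_def e2_def by algebra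
    have k2: "\<beta> * e1 = 2 * \<alpha> * e2" using F1(2) F2(1) F1(1) l unfolding e1_def e2_def by algebra
    have "(\<beta>^2 - 4 * \<alpha>) * e2 = 0" using k1 k2 by algebra
    moreover have "\<beta>^2 - 4 * \<alpha> \<noteq> 0" using ab by (auto simp: power2_eq_square algebra_simps)
    ultimately have "e2 = 0" by simp
    then have "e1 = 0" using k1 by simp
    then show ?thesis using \<open>e2 = 0\<close> F1 F2 unfolding e1_def e2_def by simp
  qed
  define ia where "ia = 1 / \<alpha>"
  have ia: "\<alpha> * ia = 1" unfolding ia_def using a0 by simp
  define A2 where "A2 = (\<lambda>q. ia * (a12 q - a21 q))"
  define A1 where "A1 = (\<lambda>q. b21 q - b12 q + \<beta> * (ia * (a12 q - a21 q)))"
  have HA: "holo \<alpha> \<beta> \<Omega> A1 A2"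
  proof (rule holo_at)
    have JA: "J A2 p (ia * (pdx a12 p - pdx a21 p)) (ia * (pdy a12 p - pdy a21 p))
      \<and> J A1 p (pdx b21 p - pdx b12 p + \<beta> * (ia * (pdx a12 p - pdx a21 p))) (pdy b21 p - pdy b12 p + \<beta> * (ia * (pdy a12 p - pdy a21 p)))"
      if p: "p \<in> \<Omega>" for p
    proof -
      note d = dd[OF p]
      show ?thesis unfolding A1_def A2_def
        by (intro conjI; rule J_eqI, (rule J_add J_diff J_mult J_const diff_J[OF d(2)] diff_J[OF d(3)]
          diff_J[OF d(6)] diff_J[OF d(7)])+) simp_all
    qed
    show "\<forall>p\<in>\<Omega>. A1 differentiable (at p) \<and> A2 differentiable (at p)" using JA J_pd(3) by blast
    fix p assume p: "p \<in> \<Omega>"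
    have pA: "pdx A2 p = ia * (pdx a12 p - pdx a21 p)" "pdy A2 p = ia * (pdy a12 p - pdy a21 p)"
      "pdx A1 p = pdx b21 p - pdx b12 p + \<beta> * (ia * (pdx a12 p - pdx a21 p))"
      "pdy A1 p = pdy b21 p - pdy b12 p + \<beta> * (ia * (pdy a12 p - pdy a21 p))"
      using JA[OF p] J_pd by blast+
    note P = PW[OF p]
    note EE = E[OF p]
    have l: "pdx a21 p = pdx a12 p + \<alpha> * (pdy b21 p - pdy b12 p) - (c2 p + \<alpha> * d1 p)"
    "pdy a21 p = pdy a12 p - (pdx b21 p - pdx b12 p) + \<beta> * (pdy b21 p - pdy b12 p) - (d2 p - c1 p + \<beta> * d1 p)"
    "pdx a22 p = - \<alpha> * pdx a11 p - \<beta> * pdx a12 p + \<alpha> * (\<alpha> * pdy b11 p + \<beta> * pdy b12 p + pdy b22 p)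
         + \<alpha> * (d2 p - c1 p + \<beta> * d1 p)"
    "pdy a22 p = - \<alpha> * pdy a11 p - \<beta> * pdy a12 p - (\<alpha> * pdx b11 p + \<beta> * pdx b12 p + pdx b22 p)
         + \<beta> * (\<alpha> * pdy b11 p + \<beta> * pdy b12 p + pdy b22 p) - (c2 p + \<alpha> * d1 p) + \<beta> * (d2 p - c1 p + \<beta> * d1 p)"
      using P by blast+
    have ee: "c2 p + \<alpha> * d1 p = 0" "d2 p - c1 p + \<beta> * d1 p = 0"
     "pdx a21 p - pdx a12 p + \<alpha> * pdx b11 p + \<beta> * pdx b12 p + pdx b22 p = 0"
     "pdy a21 p - pdy a12 p + \<alpha> * pdy b11 p + \<beta> * pdy b12 p + pdy b22 p = 0"
     "\<alpha> * (pdx b21 p - pdx b12 p) + \<beta> * (\<alpha> * pdx b11 p + \<beta> * pdx b12 p + pdx b22 p) - (\<alpha> * pdx a11 p + \<beta> * pdx a12 p + pdx a22 p) = 0"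
     "\<alpha> * (pdy b21 p - pdy b12 p) + \<beta> * (\<alpha> * pdy b11 p + \<beta> * pdy b12 p + pdy b22 p) - (\<alpha> * pdy a11 p + \<beta> * pdy a12 p + pdy a22 p) = 0"
      using EE by blast+
    have g1: "pdx A1 p - \<alpha> * pdy A2 p = 0" unfolding pA using ia l ee by algebra
    have g2: "pdy A1 p + pdx A2 p - \<beta> * pdy A2 p = 0" unfolding pA using ia l ee by algebra
    show "pdx A1 p - \<alpha> * pdy A2 p = 0 \<and> pdy A1 p + pdx A2 p - \<beta> * pdy A2 p = 0" using g1 g2 by blast
  qed
  have RA: "\<forall>p\<in>\<Omega>. a21 p = - \<alpha> * A2 p + a12 p
                   \<and> a22 p = \<alpha> * A1 p - \<alpha> * a11 p - \<beta> * a12 p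
                   \<and> b21 p = A1 p - \<beta> * A2 p + b12 p
                   \<and> b22 p = \<alpha> * A2 p - \<alpha> * b11 p - \<beta> * b12 p"
  proof
    fix p assume p: "p \<in> \<Omega>"
    note P = PW[OF p]
    have q: "a21 p - a12 p + \<alpha> * b11 p + \<beta> * b12 p + b22 p = 0"
      "\<alpha> * (b21 p - b12 p) + \<beta> * (\<alpha> * b11 p + \<beta> * b12 p + b22 p) - (\<alpha> * a11 p + \<beta> * a12 p + a22 p) = 0"
      using P by blast+
    show "a21 p = - \<alpha> * A2 p + a12 p
                   \<and> a22 p = \<alpha> * A1 p - \<alpha> * a11 p - \<beta> * a12 p
                   \<and> b21 p = A1 p - \<beta> * A2 p + b12 p
                   \<and> b22 p = \<alpha> * A2 p - \<alpha> * b11 p - \<beta> * b12 p"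
    proof -
      have "a21 p = - \<alpha> * A2 p + a12 p" unfolding A2_def using ia q by algebra
      moreover have "a22 p = \<alpha> * A1 p - \<alpha> * a11 p - \<beta> * a12 p" unfolding A1_def using ia q by algebra
      moreover have "b21 p = A1 p - \<beta> * A2 p + b12 p" unfolding A1_def A2_def by simp
      moreover have "b22 p = \<alpha> * A2 p - \<alpha> * b11 p - \<beta> * b12 p" unfolding A2_def using ia q by algebra
      ultimately show ?thesis by blast
    qed
  qed
  have C2: "\<forall>p\<in>\<Omega>. c2 p = - \<alpha> * d1 p \<and> d2 p = c1 p - \<beta> * d1 p"
  proof
    fix p assume p: "p \<in> \<Omega>"
    have "c2 p + \<alpha> * d1 p = 0" "d2 p - c1 p + \<beta> * d1 p = 0" using E[OF p] by blast+
    then show "c2 p = - \<alpha> * d1 p \<and> d2 p = c1 p - \<beta> * d1 p" by linarith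
  qed
  show ?thesis using H1 H3 C2 HA RA by blast
qed


theorem lemma2:
  fixes \<alpha> \<beta> :: real and \<Omega> :: "(real \<times> real) set"
    and a11 a12 a21 a22 b11 b12 b21 b22 c1 c2 c3 d1 d2 d3 :: "real \<times> real \<Rightarrow> real"
  assumes "\<alpha> \<noteq> 0" and "\<alpha> * \<beta>^2 - 4 * \<alpha>^2 \<noteq> 0"
    and "open \<Omega>" and "connected \<Omega>" and "\<Omega> \<noteq> {}"
    and "C1_on \<Omega> a11" "C1_on \<Omega> a12" "C1_on \<Omega> a21" "C1_on \<Omega> a22"
    and "C1_on \<Omega> b11" "C1_on \<Omega> b12" "C1_on \<Omega> b21" "C1_on \<Omega> b22"
    and "C1_on \<Omega> c1" "C1_on \<Omega> c2" "C1_on \<Omega> c3"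
    and "C1_on \<Omega> d1" "C1_on \<Omega> d2" "C1_on \<Omega> d3"
  shows "associated \<alpha> \<beta> \<Omega> (opP a11 a12 a21 a22 c1 c2 c3) (opP b11 b12 b21 b22 d1 d2 d3)
    \<longleftrightarrow> holo \<alpha> \<beta> \<Omega> c1 d1 \<and> holo \<alpha> \<beta> \<Omega> c3 d3
        \<and> (\<forall>p\<in>\<Omega>. c2 p = - \<alpha> * d1 p \<and> d2 p = c1 p - \<beta> * d1 p)
        \<and> (\<exists>A1 A2. holo \<alpha> \<beta> \<Omega> A1 A2 \<and>
             (\<forall>p\<in>\<Omega>. a21 p = - \<alpha> * A2 p + a12 p
                   \<and> a22 p = \<alpha> * A1 p - \<alpha> * a11 p - \<beta> * a12 p
                   \<and> b21 p = A1 p - \<beta> * A2 p + b12 p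
                   \<and> b22 p = \<alpha> * A2 p - \<alpha> * b11 p - \<beta> * b12 p))"
proof
  assume As: "associated \<alpha> \<beta> \<Omega> (opP a11 a12 a21 a22 c1 c2 c3) (opP b11 b12 b21 b22 d1 d2 d3)"
  show "holo \<alpha> \<beta> \<Omega> c1 d1 \<and> holo \<alpha> \<beta> \<Omega> c3 d3
        \<and> (\<forall>p\<in>\<Omega>. c2 p = - \<alpha> * d1 p \<and> d2 p = c1 p - \<beta> * d1 p)
        \<and> (\<exists>A1 A2. holo \<alpha> \<beta> \<Omega> A1 A2 \<and>
             (\<forall>p\<in>\<Omega>. a21 p = - \<alpha> * A2 p + a12 p
                   \<and> a22 p = \<alpha> * A1 p - \<alpha> * a11 p - \<beta> * a12 p
                   \<and> b21 p = A1 p - \<beta> * A2 p + b12 p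
                   \<and> b22 p = \<alpha> * A2 p - \<alpha> * b11 p - \<beta> * b12 p))"
    by (rule only_if[OF assms(1,2,3) assms(6-19) As])
next
  assume R: "holo \<alpha> \<beta> \<Omega> c1 d1 \<and> holo \<alpha> \<beta> \<Omega> c3 d3
        \<and> (\<forall>p\<in>\<Omega>. c2 p = - \<alpha> * d1 p \<and> d2 p = c1 p - \<beta> * d1 p)
        \<and> (\<exists>A1 A2. holo \<alpha> \<beta> \<Omega> A1 A2 \<and>
             (\<forall>p\<in>\<Omega>. a21 p = - \<alpha> * A2 p + a12 p
                   \<and> a22 p = \<alpha> * A1 p - \<alpha> * a11 p - \<beta> * a12 p
                   \<and> b21 p = A1 p - \<beta> * A2 p + b12 p
                   \<and> b22 p = \<alpha> * A2 p - \<alpha> * b11 p - \<beta> * b12 p))"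
  then obtain A1 A2 where h1: "holo \<alpha> \<beta> \<Omega> c1 d1" and h3: "holo \<alpha> \<beta> \<Omega> c3 d3"
    and r1: "\<forall>p\<in>\<Omega>. c2 p = - \<alpha> * d1 p \<and> d2 p = c1 p - \<beta> * d1 p"
    and hA: "holo \<alpha> \<beta> \<Omega> A1 A2"
    and rA: "\<forall>p\<in>\<Omega>. a21 p = - \<alpha> * A2 p + a12 p
                   \<and> a22 p = \<alpha> * A1 p - \<alpha> * a11 p - \<beta> * a12 p
                   \<and> b21 p = A1 p - \<beta> * A2 p + b12 p
                   \<and> b22 p = \<alpha> * A2 p - \<alpha> * b11 p - \<beta> * b12 p" by blast
  show "associated \<alpha> \<beta> \<Omega> (opP a11 a12 a21 a22 c1 c2 c3) (opP b11 b12 b21 b22 d1 d2 d3)"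
    unfolding associated_def
    using if_dir[OF assms(3) assms(6-19) h1 h3 r1 hA rA] by blast
qed

end
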